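(* Let $A$ be a commutative unital Rickart C*-algebra. Then the lattice $L_A$ has a pseudocomplement $\neg$, determined by $\neg\mathtt{D}_a=\mathtt{D}_{[a=0]}$ for $a\in A^+$.
   Context: $L_A$ is the distributive lattice freely generated by symbols $\mathtt{D}_a$, $a\in A_{\mathrm{sa}}$, subject to $\mathtt{D}_1=1$, $\mathtt{D}_a\wedge\mathtt{D}_{-a}=0$, $\mathtt{D}_{-b^2}=0$, $\mathtt{D}_{a+b}\le\mathtt{D}_a\vee\mathtt{D}_b$, $\mathtt{D}_{ab}=(\mathtt{D}_a\wedge\mathtt{D}_b)\vee(\mathtt{D}_{-a}\wedge\mathtt{D}_{-b})$; every element of $L_A$ is of the form $\mathtt{D}_a$ with $a\in A^+$. For a commutative Rickart C*-algebra and $a\in A$, $[a=0]$ is the unique projection with $a[a=0]=0$ and $b=b[a=0]$ whenever $ab=0$. A pseudocomplement on a distributive lattice $L$ with $0$ is an antitone map $\neg\colon L\to L$ such that $x\wedge y=0$ iff $x\le\neg y$. *)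

theory Defs
  imports "HOL-Analysis.Analysis"
begin

class comm_cstar_algebra = comm_ring_1 + real_normed_algebra_1 + banach +
  fixes scaleC :: "complex \<Rightarrow> 'a \<Rightarrow> 'a"
    and cstar :: "'a \<Rightarrow> 'a"
  assumes scaleC_add_left: "scaleC (c + d) x = scaleC c x + scaleC d x"
    and scaleC_add_right: "scaleC c (x + y) = scaleC c x + scaleC c y"
    and scaleC_scaleC: "scaleC c (scaleC d x) = scaleC (c * d) x"
    and scaleC_one: "scaleC 1 x = x"
    and scaleC_of_real: "scaleC (complex_of_real r) x = scaleR r x"
    and scaleC_mult_left: "scaleC c (x * y) = scaleC c x * y"
    and norm_scaleC: "norm (scaleC c x) = cmod c * norm x"
    and cstar_cstar: "cstar (cstar x) = x"
    and cstar_add: "cstar (x + y) = cstar x + cstar y"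
    and cstar_mult: "cstar (x * y) = cstar y * cstar x"
    and cstar_scaleC: "cstar (scaleC c x) = scaleC (cnj c) (cstar x)"
    and cstar_identity: "norm (cstar x * x) = (norm x)\<^sup>2"

definition self_adjoint :: "'a::comm_cstar_algebra \<Rightarrow> bool" where
  "self_adjoint a \<longleftrightarrow> cstar a = a"

definition positive :: "'a::comm_cstar_algebra \<Rightarrow> bool" where
  "positive a \<longleftrightarrow> (\<exists>b. a = cstar b * b)"

definition projection :: "'a::comm_cstar_algebra \<Rightarrow> bool" where
  "projection p \<longleftrightarrow> cstar p = p \<and> p * p = p"

text \<open>Rickart: the annihilator of every element is generated by a projection.\<close>
definition rickart :: "'a::comm_cstar_algebra itself \<Rightarrow> bool" where
  "rickart _ \<longleftrightarrow> (\<forall>a::'a. \<exists>p. projection p \<and> a * p = 0 \<and> (\<forall>b. a * b = 0 \<longrightarrow> b = b * p))"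

definition zero_proj :: "'a::comm_cstar_algebra \<Rightarrow> 'a" where
  "zero_proj a = (THE p. projection p \<and> a * p = 0 \<and> (\<forall>b. a * b = 0 \<longrightarrow> b = b * p))"

datatype 'a lterm = D 'a | LTop | LBot | LMeet "'a lterm" "'a lterm" | LJoin "'a lterm" "'a lterm"

fun lwf :: "'a::comm_cstar_algebra lterm \<Rightarrow> bool" where
  "lwf (D a) = self_adjoint a"
| "lwf LTop = True"
| "lwf LBot = True"
| "lwf (LMeet x y) = (lwf x \<and> lwf y)"
| "lwf (LJoin x y) = (lwf x \<and> lwf y)"

text \<open>The least preorder on terms making the quotient a bounded distributive lattice
  and satisfying the defining relations of \<open>L_A\<close>. The lattice \<open>L_A\<close> is the set of well-formed
  terms modulo the equivalence \<open>x \<le> y \<and> y \<le> x\<close>, ordered by \<open>lle\<close>.\<close>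
inductive lle :: "'a::comm_cstar_algebra lterm \<Rightarrow> 'a lterm \<Rightarrow> bool" where
  refl: "lle x x"
| trans: "lle x y \<Longrightarrow> lle y z \<Longrightarrow> lle x z"
| meet1: "lle (LMeet x y) x"
| meet2: "lle (LMeet x y) y"
| meetI: "lle z x \<Longrightarrow> lle z y \<Longrightarrow> lle z (LMeet x y)"
| join1: "lle x (LJoin x y)"
| join2: "lle y (LJoin x y)"
| joinI: "lle x z \<Longrightarrow> lle y z \<Longrightarrow> lle (LJoin x y) z"
| bot: "lle LBot x"
| top: "lle x LTop"
| distrib: "lle (LMeet x (LJoin y z)) (LJoin (LMeet x y) (LMeet x z))"
| rel_one: "lle LTop (D 1)"
| rel_neg: "self_adjoint a \<Longrightarrow> lle (LMeet (D a) (D (- a))) LBot"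
| rel_sq: "self_adjoint b \<Longrightarrow> lle (D (- (b * b))) LBot"
| rel_add: "self_adjoint a \<Longrightarrow> self_adjoint b \<Longrightarrow> lle (D (a + b)) (LJoin (D a) (D b))"
| rel_mult1: "self_adjoint a \<Longrightarrow> self_adjoint b \<Longrightarrow>
    lle (D (a * b)) (LJoin (LMeet (D a) (D b)) (LMeet (D (- a)) (D (- b))))"
| rel_mult2: "self_adjoint a \<Longrightarrow> self_adjoint b \<Longrightarrow>
    lle (LJoin (LMeet (D a) (D b)) (LMeet (D (- a)) (D (- b)))) (D (a * b))"

definition leq :: "'a::comm_cstar_algebra lterm \<Rightarrow> 'a lterm \<Rightarrow> bool" where
  "leq x y \<longleftrightarrow> lle x y \<and> lle y x"

text \<open>A pseudocomplement on \<open>L_A\<close>, given on representatives: a map on well-formed terms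
  that is well defined on equivalence classes, antitone, and satisfies
  \<open>x \<and> y = 0 \<longleftrightarrow> x \<le> \<not> y\<close>.\<close>
definition is_pseudocomplement_LA :: "('a::comm_cstar_algebra lterm \<Rightarrow> 'a lterm) \<Rightarrow> bool" where
  "is_pseudocomplement_LA N \<longleftrightarrow>
     (\<forall>x. lwf x \<longrightarrow> lwf (N x)) \<and>
     (\<forall>x y. lwf x \<longrightarrow> lwf y \<longrightarrow> leq x y \<longrightarrow> leq (N x) (N y)) \<and>
     (\<forall>x y. lwf x \<longrightarrow> lwf y \<longrightarrow> lle x y \<longrightarrow> lle (N y) (N x)) \<and>
     (\<forall>x y. lwf x \<longrightarrow> lwf y \<longrightarrow> (leq (LMeet x y) LBot \<longleftrightarrow> lle x (N y)))"

end

theory Submission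
  imports Defs "HOL-Computational_Algebra.Formal_Power_Series"
begin

lemma scaleC_zero_left [simp]: "scaleC 0 (x::'a::comm_cstar_algebra) = 0"
  using scaleC_of_real[of 0 x] by simp

lemma scaleC_minus_left: "scaleC (-c) (x::'a::comm_cstar_algebra) = - scaleC c x"
  using scaleC_add_left[of c "-c" x] by (metis neg_eq_iff_add_eq_0 scaleC_zero_left add.right_inverse)

lemma cstar_zero [simp]: "cstar (0::'a::comm_cstar_algebra) = 0"
  using cstar_add[of "0::'a" 0] by simp

lemma cstar_minus [simp]: "cstar (- x::'a::comm_cstar_algebra) = - cstar x"
  using cstar_add[of "-x" x] by (simp add: eq_neg_iff_add_eq_0)

lemma cstar_diff [simp]: "cstar (x - y::'a::comm_cstar_algebra) = cstar x - cstar y"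
  using cstar_add[of x "-y"] by simp

lemma cstar_one [simp]: "cstar (1::'a::comm_cstar_algebra) = 1"
proof -
  have "cstar (cstar (1::'a) * 1) = cstar 1 * cstar (cstar 1)" by (rule cstar_mult)
  then show ?thesis by (simp add: cstar_cstar)
qed

lemma cstar_scaleR [simp]: "cstar (r *\<^sub>R (x::'a::comm_cstar_algebra)) = r *\<^sub>R cstar x"
  by (metis complex_cnj_complex_of_real cstar_scaleC scaleC_of_real)

lemma norm_cstar [simp]: "norm (cstar (x::'a::comm_cstar_algebra)) = norm x"
proof -
  have le: "norm y \<le> norm (cstar y)" for y :: 'a
  proof (cases "norm y = 0")
    case True then show ?thesis by simp
  next
    case False
    have "(norm y)\<^sup>2 = norm (cstar y * y)" by (simp add: cstar_identity)
    also have "\<dots> \<le> norm (cstar y) * norm y" by (rule norm_mult_ineq)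
    finally have "norm y * norm y \<le> norm (cstar y) * norm y" by (simp add: power2_eq_square)
    then show ?thesis using False by (simp add: mult_le_cancel_right)
  qed
  show ?thesis using le[of x] le[of "cstar x"] by (simp add: cstar_cstar)
qed

lemma bounded_linear_cstar: "bounded_linear (cstar :: 'a::comm_cstar_algebra \<Rightarrow> 'a)"
  by (rule bounded_linear_intro[where K=1]) (auto simp: cstar_add)

lemma cstar_power: "cstar ((x::'a::comm_cstar_algebra) ^ n) = cstar x ^ n"
  by (induction n) (auto simp: cstar_mult mult.commute)

lemma sa_zero [simp]: "self_adjoint (0::'a::comm_cstar_algebra)"
  by (simp add: self_adjoint_def)
lemma sa_one [simp]: "self_adjoint (1::'a::comm_cstar_algebra)"
  by (simp add: self_adjoint_def)
lemma sa_add: "self_adjoint x \<Longrightarrow> self_adjoint y \<Longrightarrow> self_adjoint (x + (y::'a::comm_cstar_algebra))"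
  by (simp add: self_adjoint_def cstar_add)
lemma sa_diff: "self_adjoint x \<Longrightarrow> self_adjoint y \<Longrightarrow> self_adjoint (x - (y::'a::comm_cstar_algebra))"
  by (simp add: self_adjoint_def)
lemma sa_minus: "self_adjoint x \<Longrightarrow> self_adjoint (- (x::'a::comm_cstar_algebra))"
  by (simp add: self_adjoint_def)
lemma sa_mult: "self_adjoint x \<Longrightarrow> self_adjoint y \<Longrightarrow> self_adjoint (x * (y::'a::comm_cstar_algebra))"
  by (simp add: self_adjoint_def cstar_mult mult.commute)
lemma sa_scaleR: "self_adjoint x \<Longrightarrow> self_adjoint (r *\<^sub>R (x::'a::comm_cstar_algebra))"
  by (simp add: self_adjoint_def)
lemma sa_power: "self_adjoint x \<Longrightarrow> self_adjoint ((x::'a::comm_cstar_algebra) ^ n)"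
  by (simp add: self_adjoint_def cstar_power)

lemma norm_sq_sa: "self_adjoint x \<Longrightarrow> norm ((x::'a::comm_cstar_algebra) * x) = (norm x)\<^sup>2"
  using cstar_identity[of x] by (simp add: self_adjoint_def)

definition jj :: "'a::comm_cstar_algebra" where "jj = scaleC \<i> 1"

lemma cstar_jj: "cstar (jj::'a::comm_cstar_algebra) = - jj"
  by (simp add: jj_def cstar_scaleC scaleC_minus_left)

lemma jj_sq: "(jj::'a::comm_cstar_algebra) * jj = -1"
proof -
  have "(jj::'a) * jj = scaleC \<i> (1 * scaleC \<i> 1)" unfolding jj_def by (rule scaleC_mult_left[symmetric])
  also have "\<dots> = scaleC (-1) 1" by (simp add: scaleC_scaleC)
  also have "\<dots> = -1" by (simp add: scaleC_minus_left scaleC_one)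
  finally show ?thesis .
qed

lemma cstar_z_z:
  assumes "self_adjoint x" "self_adjoint (y::'a::comm_cstar_algebra)"
  shows "cstar (x + jj * y) * (x + jj * y) = x * x + y * y"
proof -
  have c: "cstar (x + jj * y) = x - jj * y"
    using assms by (simp add: self_adjoint_def cstar_add cstar_mult cstar_jj mult.commute)
  have "cstar (x + jj * y) * (x + jj * y) = (x - jj * y) * (x + jj * y)" by (simp only: c)
  also have "\<dots> = x * x - (jj * jj) * (y * y)"
    by (simp add: algebra_simps)
  finally have "cstar (x + jj * y) * (x + jj * y) = x * x - (jj * jj) * (y * y)" .
  then show ?thesis by (simp add: jj_sq)
qed

lemma twosq:
  assumes "self_adjoint x" "self_adjoint (y::'a::comm_cstar_algebra)"
  shows "norm (x * x) \<le> norm (x * x + y * y)"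
proof -
  define z where "z = x + jj * y"
  have zz: "(norm z)\<^sup>2 = norm (x * x + y * y)"
    using cstar_identity[of z] cstar_z_z[OF assms] by (simp add: z_def)
  have "cstar z = x - jj * y"
    using assms by (simp add: z_def self_adjoint_def cstar_add cstar_mult cstar_jj mult.commute)
  then have "x + x = z + cstar z" by (simp add: z_def)
  then have "norm (x + x) \<le> norm z + norm z" by (metis norm_cstar norm_triangle_ineq)
  moreover have "norm (x + x) = 2 * norm x" unfolding scaleR_2[symmetric] by simp
  ultimately have "norm x \<le> norm z" by simp
  then have "(norm x)\<^sup>2 \<le> (norm z)\<^sup>2" by (simp add: power_mono)
  then show ?thesis using zz norm_sq_sa[OF assms(1)] by simp
qed

definition cf :: "real \<Rightarrow> nat \<Rightarrow> real" where "cf \<alpha> n = (\<alpha> gchoose n) * (-1) ^ n"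

lemma sign_prod_aux: "(-1) ^ k * (\<Prod>i<k. (a::real) - of_nat i) = (\<Prod>i<k. of_nat i - a)"
  by (induction k) (simp_all add: algebra_simps)

lemma gchoose_sign_prod: "(-1) ^ k * (a gchoose k) * fact k = (\<Prod>i<k. of_nat i - (a::real))"
proof -
  have "(-1) ^ k * (a gchoose k) * fact k = (-1) ^ k * (\<Prod>i = 0..<k. a - of_nat i)"
    by (simp add: gbinomial_mult_fact' mult.assoc)
  also have "\<dots> = (\<Prod>i<k. of_nat i - a)"
    by (simp add: atLeast0LessThan sign_prod_aux)
  finally show ?thesis .
qed

lemma cf_Suc_nonpos:
  assumes "0 \<le> \<alpha>" "\<alpha> \<le> 1"
  shows "cf \<alpha> (Suc n) \<le> 0"
proof -
  have "cf \<alpha> (Suc n) * fact (Suc n) = (\<Prod>i<Suc n. of_nat i - \<alpha>)"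
    using gchoose_sign_prod[of "Suc n" \<alpha>] by (simp add: cf_def mult.commute mult.left_commute)
  also have "\<dots> = (\<Prod>i<n. of_nat (Suc i) - \<alpha>) * (0 - \<alpha>)"
    by (simp only: prod.lessThan_Suc_shift) (simp add: mult.commute)
  also have "\<dots> \<le> 0"
  proof -
    have "(\<Prod>i<n. of_nat (Suc i) - \<alpha>) \<ge> 0" using assms by (intro prod_nonneg) auto
    then show ?thesis using assms by (simp add: mult_nonneg_nonpos)
  qed
  finally have X: "cf \<alpha> (Suc n) * fact (Suc n) \<le> 0" .
  have "cf \<alpha> (Suc n) = (cf \<alpha> (Suc n) * fact (Suc n)) / fact (Suc n)" by simp
  then show ?thesis using X by (metis divide_nonpos_pos fact_gt_zero)
qed

lemma cf_partial_nonneg: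
  assumes "\<alpha> \<le> 1"
  shows "(\<Sum>k\<le>N. cf \<alpha> k) \<ge> 0"
proof -
  have "(\<Sum>k\<le>N. cf \<alpha> k) = (-1) ^ N * (\<alpha> - 1 gchoose N)"
    using gbinomial_sum_lower_neg[of \<alpha> N] by (simp add: cf_def)
  moreover have "(-1) ^ N * (\<alpha> - 1 gchoose N) * fact N \<ge> 0"
    unfolding gchoose_sign_prod using assms by (intro prod_nonneg) auto
  moreover have "(-1) ^ N * (\<alpha> - 1 gchoose N) = ((-1) ^ N * (\<alpha> - 1 gchoose N) * fact N) / fact N"
    by simp
  ultimately show ?thesis by (metis divide_nonneg_pos fact_gt_zero)
qed

lemma cf_0 [simp]: "cf \<alpha> 0 = 1" by (simp add: cf_def)

lemma cf_abs_summable: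
  assumes "0 \<le> \<alpha>" "\<alpha> \<le> 1"
  shows "summable (\<lambda>n. \<bar>cf \<alpha> n\<bar>)"
proof (rule summableI_nonneg_bounded[where x=2])
  fix N
  show "(\<Sum>n<N. \<bar>cf \<alpha> n\<bar>) \<le> 2"
  proof (cases N)
    case 0 then show ?thesis by simp
  next
    case (Suc M)
    have "(\<Sum>n<N. \<bar>cf \<alpha> n\<bar>) = (\<Sum>n\<le>M. \<bar>cf \<alpha> n\<bar>)" using Suc by (simp add: lessThan_Suc_atMost)
    also have "\<dots> = 1 + (\<Sum>n<M. \<bar>cf \<alpha> (Suc n)\<bar>)"
      by (simp add: sum.atMost_shift)
    also have "(\<Sum>n<M. \<bar>cf \<alpha> (Suc n)\<bar>) = - (\<Sum>n<M. cf \<alpha> (Suc n))"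
      using cf_Suc_nonpos[OF assms] by (simp add: sum_negf[symmetric])
    also have "(\<Sum>n<M. cf \<alpha> (Suc n)) = (\<Sum>k\<le>M. cf \<alpha> k) - 1"
      by (simp add: sum.atMost_shift)
    finally show ?thesis using cf_partial_nonneg[of \<alpha> M] assms by simp
  qed
qed simp

definition pw :: "real \<Rightarrow> 'a::comm_cstar_algebra \<Rightarrow> 'a" where
  "pw \<alpha> h = (\<Sum>n. cf \<alpha> n *\<^sub>R h ^ n)"

lemma pw_norm_summable:
  assumes "0 \<le> \<alpha>" "\<alpha> \<le> 1" "norm (h::'a::comm_cstar_algebra) \<le> 1"
  shows "summable (\<lambda>n. norm (cf \<alpha> n *\<^sub>R h ^ n))"
proof (rule summable_comparison_test'[OF cf_abs_summable[OF assms(1,2)]])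
  fix n
  have "norm (h ^ n) \<le> norm h ^ n" by (rule norm_power_ineq)
  also have "\<dots> \<le> 1" using assms(3) by (simp add: power_le_one)
  finally have "norm (h ^ n) \<le> 1" .
  then show "norm (norm (cf \<alpha> n *\<^sub>R h ^ n)) \<le> \<bar>cf \<alpha> n\<bar>"
    by (simp add: mult_left_le)
qed

lemma pw_mult:
  assumes "0 \<le> \<alpha>" "\<alpha> \<le> 1" "0 \<le> \<beta>" "\<beta> \<le> 1" "norm (h::'a::comm_cstar_algebra) \<le> 1"
  shows "pw \<alpha> h * pw \<beta> h = pw (\<alpha> + \<beta>) h"
proof -
  have "pw \<alpha> h * pw \<beta> h = (\<Sum>k. \<Sum>i\<le>k. (cf \<alpha> i *\<^sub>R h ^ i) * (cf \<beta> (k - i) *\<^sub>R h ^ (k - i)))"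
    unfolding pw_def
    by (rule Cauchy_product[OF pw_norm_summable[OF assms(1,2,5)] pw_norm_summable[OF assms(3,4,5)]])
  also have "\<dots> = (\<Sum>k. cf (\<alpha> + \<beta>) k *\<^sub>R h ^ k)"
  proof (rule suminf_cong)
    fix k
    have "(\<Sum>i\<le>k. (cf \<alpha> i *\<^sub>R h ^ i) * (cf \<beta> (k - i) *\<^sub>R h ^ (k - i)))
        = (\<Sum>i\<le>k. (cf \<alpha> i * cf \<beta> (k - i)) *\<^sub>R h ^ k)"
    proof (rule sum.cong[OF HOL.refl])
      fix i assume "i \<in> {..k}"
      then have "h ^ i * h ^ (k - i) = h ^ k" by (simp add: power_add[symmetric])
      then show "(cf \<alpha> i *\<^sub>R h ^ i) * (cf \<beta> (k - i) *\<^sub>R h ^ (k - i)) = (cf \<alpha> i * cf \<beta> (k - i)) *\<^sub>R h ^ k"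
        by simp
    qed
    also have "\<dots> = (\<Sum>i\<le>k. cf \<alpha> i * cf \<beta> (k - i)) *\<^sub>R h ^ k"
      by (simp add: scaleR_sum_left)
    also have "(\<Sum>i\<le>k. cf \<alpha> i * cf \<beta> (k - i)) = cf (\<alpha> + \<beta>) k"
    proof -
      have "(\<Sum>i\<le>k. cf \<alpha> i * cf \<beta> (k - i)) = (\<Sum>i\<le>k. (-1)^k * ((\<alpha> gchoose i) * (\<beta> gchoose (k - i))))"
      proof (rule sum.cong[OF HOL.refl])
        fix i assume "i \<in> {..k}"
        then have "(-1::real) ^ i * (-1) ^ (k - i) = (-1) ^ k" by (simp add: power_add[symmetric])
        then show "cf \<alpha> i * cf \<beta> (k - i) = (-1)^k * ((\<alpha> gchoose i) * (\<beta> gchoose (k - i)))"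
          unfolding cf_def by (metis (no_types, lifting) mult.commute mult.left_commute)
      qed
      also have "\<dots> = (-1)^k * ((\<alpha> + \<beta>) gchoose k)"
        using gbinomial_Vandermonde[of \<alpha> \<beta> k] by (simp add: sum_distrib_left[symmetric] atLeast0AtMost)
      finally show ?thesis by (simp add: cf_def mult.commute)
    qed
    finally show "(\<Sum>i\<le>k. (cf \<alpha> i *\<^sub>R h ^ i) * (cf \<beta> (k - i) *\<^sub>R h ^ (k - i))) = cf (\<alpha> + \<beta>) k *\<^sub>R h ^ k" .
  qed
  finally show ?thesis by (simp add: pw_def)
qed

lemma pw_one: "pw 1 (h::'a::comm_cstar_algebra) = 1 - h"
proof -
  have c: "cf 1 n = 0" if "n \<notin> {..<2}" for n
  proof -
    have "(1::real) gchoose n = of_nat (1 choose n)" by (metis binomial_gbinomial of_nat_1)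
    moreover have "(1::nat) choose n = 0" using that by (simp add: binomial_eq_0)
    ultimately show ?thesis by (simp add: cf_def)
  qed
  have "pw 1 h = (\<Sum>n<2. cf 1 n *\<^sub>R h ^ n)"
    unfolding pw_def by (rule suminf_finite) (auto simp: c)
  also have "\<dots> = 1 - h" by (simp add: cf_def numeral_2_eq_2)
  finally show ?thesis .
qed

lemma pw_sa:
  assumes "0 \<le> \<alpha>" "\<alpha> \<le> 1" "norm (h::'a::comm_cstar_algebra) \<le> 1" "self_adjoint h"
  shows "self_adjoint (pw \<alpha> h)"
proof -
  have s: "summable (\<lambda>n. cf \<alpha> n *\<^sub>R h ^ n)"
    by (rule summable_norm_cancel[OF pw_norm_summable[OF assms(1-3)]])
  have "cstar (pw \<alpha> h) = (\<Sum>n. cstar (cf \<alpha> n *\<^sub>R h ^ n))"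
    unfolding pw_def by (rule bounded_linear.suminf[OF bounded_linear_cstar s])
  also have "\<dots> = pw \<alpha> h"
    using assms(4) by (simp add: pw_def cstar_power self_adjoint_def)
  finally show ?thesis by (simp add: self_adjoint_def)
qed

lemma root2:
  assumes "norm (k::'a::comm_cstar_algebra) \<le> 1" "self_adjoint k"
  shows "\<exists>r. self_adjoint r \<and> r * r = 1 - k"
proof -
  have "pw (1/2) k * pw (1/2) k = pw 1 k" using pw_mult[of "1/2" "1/2" k] assms by simp
  then show ?thesis using pw_sa[of "1/2" k] assms by (auto simp: pw_one)
qed

lemma root4:
  assumes "norm (k::'a::comm_cstar_algebra) \<le> 1" "self_adjoint k"
  shows "\<exists>r. self_adjoint r \<and> (r * r) * (r * r) = 1 - k"
proof -
  have "pw (1/4) k * pw (1/4) k = pw (1/2) k" using pw_mult[of "1/4" "1/4" k] assms by simp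
  moreover have "pw (1/2) k * pw (1/2) k = pw 1 k" using pw_mult[of "1/2" "1/2" k] assms by simp
  moreover have "self_adjoint (pw (1/4) k)" using pw_sa[of "1/4" k] assms by simp
  ultimately show ?thesis by (metis pw_one)
qed

lemma sq_scaleR: "(c *\<^sub>R (x::'a::comm_cstar_algebra)) * (c *\<^sub>R x) = (c * c) *\<^sub>R (x * x)"
  by simp

lemma one_minus_sq:
  assumes "self_adjoint (x::'a::comm_cstar_algebra)" "norm (x * x) \<le> 1"
  shows "norm (1 - x * x) \<le> 1"
proof -
  obtain r where r: "self_adjoint r" "r * r = 1 - x * x"
    using root2[of "x * x"] assms sa_mult by blast
  have "norm (r * r) \<le> norm (r * r + x * x)" by (rule twosq[OF r(1) assms(1)])
  then show ?thesis using r by simp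
qed

lemma m_minus_sq:
  assumes "self_adjoint (x::'a::comm_cstar_algebra)" "0 < m" "norm (x * x) \<le> m"
  shows "norm (m *\<^sub>R 1 - x * x) \<le> m"
proof -
  define y where "y = (1 / sqrt m) *\<^sub>R x"
  have yy: "y * y = (1 / m) *\<^sub>R (x * x)"
    using assms(2) by (simp add: y_def real_sqrt_mult[symmetric])
  have sy: "self_adjoint y" by (simp add: y_def sa_scaleR assms(1))
  have "norm (y * y) \<le> 1" using assms(2,3) by (simp add: yy divide_le_eq_1)
  then have n: "norm (1 - y * y) \<le> 1" by (rule one_minus_sq[OF sy])
  have "m *\<^sub>R 1 - x * x = m *\<^sub>R (1 - y * y)"
    using assms(2) by (simp add: yy scaleR_diff_right)
  then show ?thesis using n assms(2) by (simp add: mult_le_cancel_left1)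
qed

lemma sqrt2:
  assumes "self_adjoint (x::'a::comm_cstar_algebra)" "self_adjoint y"
  shows "\<exists>v. self_adjoint v \<and> v * v = x * x + y * y"
proof -
  define m where "m = norm (x * x) + norm (y * y) + 1"
  have m0: "0 < m" by (simp add: m_def add_nonneg_pos)
  define h where "h = (1 / (2 * m)) *\<^sub>R ((m *\<^sub>R 1 - x * x) + (m *\<^sub>R 1 - y * y))"
  have n1: "norm (m *\<^sub>R 1 - x * x) \<le> m" by (rule m_minus_sq[OF assms(1) m0]) (simp add: m_def)
  have n2: "norm (m *\<^sub>R 1 - y * y) \<le> m" by (rule m_minus_sq[OF assms(2) m0]) (simp add: m_def)
  have "norm ((m *\<^sub>R 1 - x * x) + (m *\<^sub>R 1 - y * y)) \<le> m + m"
    by (rule order_trans[OF norm_triangle_ineq add_mono[OF n1 n2]])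
  then have nh: "norm h \<le> 1" using m0 unfolding h_def norm_scaleR by (simp add: divide_le_eq_1)
  have sh: "self_adjoint h"
    unfolding h_def by (intro sa_scaleR sa_add sa_diff sa_mult assms) simp_all
  obtain r where r: "self_adjoint r" "r * r = 1 - h" using root2[OF nh sh] by blast
  have "(m *\<^sub>R 1 - x * x) + (m *\<^sub>R 1 - y * y) = (m *\<^sub>R 1 + m *\<^sub>R 1) - (x * x + y * y)"
    by (simp add: algebra_simps)
  also have "m *\<^sub>R 1 + m *\<^sub>R 1 = (2 * m) *\<^sub>R (1::'a)" by (metis mult_2 scaleR_add_left)
  finally have hh: "h = (1 / (2 * m)) *\<^sub>R ((2 * m) *\<^sub>R 1 - (x * x + y * y))" by (simp only: h_def)
  have e: "1 - h = (1 / (2 * m)) *\<^sub>R (x * x + y * y)"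
    unfolding hh scaleR_diff_right scaleR_scaleR using m0 by simp
  define v where "v = sqrt (2 * m) *\<^sub>R r"
  have "v * v = (sqrt (2 * m) * sqrt (2 * m)) *\<^sub>R (r * r)" unfolding v_def by (rule sq_scaleR)
  also have "sqrt (2 * m) * sqrt (2 * m) = 2 * m" using m0 by simp
  also have "(2 * m) *\<^sub>R (r * r) = (2 * m) *\<^sub>R ((1 / (2 * m)) *\<^sub>R (x * x + y * y))" by (simp only: r e)
  also have "\<dots> = x * x + y * y" using m0 by (simp only: scaleR_scaleR) simp
  finally have "v * v = x * x + y * y" .
  moreover have "self_adjoint v" unfolding v_def by (rule sa_scaleR[OF r(1)])
  ultimately show ?thesis by blast
qed

lemma absval:
  assumes "self_adjoint (a::'a::comm_cstar_algebra)"
  shows "\<exists>s. self_adjoint s \<and> (s * s) * (s * s) = a * a"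
proof -
  define m where "m = norm (a * a) + 1"
  have m0: "0 < m" by (simp add: m_def add_nonneg_pos)
  define h where "h = (1 / m) *\<^sub>R (m *\<^sub>R 1 - a * a)"
  have n1: "norm (m *\<^sub>R 1 - a * a) \<le> m" by (rule m_minus_sq[OF assms m0]) (simp add: m_def)
  then have nh: "norm h \<le> 1" using m0 unfolding h_def norm_scaleR by (simp add: divide_le_eq_1)
  have sh: "self_adjoint h" unfolding h_def by (intro sa_scaleR sa_add sa_diff sa_mult assms) simp_all
  obtain r where r: "self_adjoint r" "(r * r) * (r * r) = 1 - h" using root4[OF nh sh] by blast
  have e: "1 - h = (1 / m) *\<^sub>R (a * a)"
    unfolding h_def scaleR_diff_right scaleR_scaleR using m0 by simp
  define s where "s = sqrt (sqrt m) *\<^sub>R r"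
  have "s * s = (sqrt (sqrt m) * sqrt (sqrt m)) *\<^sub>R (r * r)" unfolding s_def by (rule sq_scaleR)
  also have "sqrt (sqrt m) * sqrt (sqrt m) = sqrt m" using m0 by simp
  finally have "(s * s) * (s * s) = (sqrt m * sqrt m) *\<^sub>R ((r * r) * (r * r))" 
    by (simp only: sq_scaleR)
  also have "sqrt m * sqrt m = m" using m0 by simp
  also have "m *\<^sub>R ((r * r) * (r * r)) = m *\<^sub>R ((1 / m) *\<^sub>R (a * a))" by (simp only: r e)
  also have "\<dots> = a * a" using m0 by (simp only: scaleR_scaleR) simp
  finally have "(s * s) * (s * s) = a * a" .
  moreover have "self_adjoint s" unfolding s_def by (rule sa_scaleR[OF r(1)])
  ultimately show ?thesis by blast
qed

inductive sos :: "'a::comm_cstar_algebra \<Rightarrow> bool" where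
  sos0: "sos 0"
| sosI: "self_adjoint x \<Longrightarrow> sos s \<Longrightarrow> sos (x * x + s)"

lemma sos_sa: "sos s \<Longrightarrow> self_adjoint s"
  by (induction rule: sos.induct) (auto intro: sa_add sa_mult)

lemma sos_sq: "self_adjoint x \<Longrightarrow> sos (x * x)"
  using sosI[OF _ sos0] by fastforce

lemma sos_one: "sos (1::'a::comm_cstar_algebra)"
  using sos_sq[of "1::'a"] by simp

lemma sos_add: "sos s \<Longrightarrow> sos t \<Longrightarrow> sos (s + t)"
  by (induction rule: sos.induct) (auto simp: add.assoc intro: sosI)

lemma sos_mult_sq: "sos t \<Longrightarrow> self_adjoint x \<Longrightarrow> sos (x * x * t)"
proof (induction rule: sos.induct)
  case sos0 then show ?case by (simp add: sos.sos0)
next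
  case (sosI y s)
  have "x * x * (y * y + s) = (x * y) * (x * y) + x * x * s" by (simp add: algebra_simps)
  then show ?case using sosI by (auto intro!: sos.sosI sa_mult)
qed

lemma sos_mult: "sos s \<Longrightarrow> sos t \<Longrightarrow> sos (s * t)"
proof (induction rule: sos.induct)
  case sos0 then show ?case by (simp add: sos.sos0)
next
  case (sosI x s)
  have "(x * x + s) * t = x * x * t + s * t" by (simp add: algebra_simps)
  then show ?case using sosI sos_mult_sq sos_add by metis
qed

lemma sos_scaleR: "sos s \<Longrightarrow> 0 \<le> r \<Longrightarrow> sos (r *\<^sub>R s)"
proof (induction rule: sos.induct)
  case sos0 then show ?case by (simp add: sos.sos0)
next
  case (sosI x s)
  have "r *\<^sub>R (x * x + s) = (sqrt r *\<^sub>R x) * (sqrt r *\<^sub>R x) + r *\<^sub>R s"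
    using sosI(4) by (simp add: scaleR_add_right real_sqrt_mult[symmetric])
  then show ?case using sosI by (metis sos.sosI sa_scaleR)
qed

lemma norm_sos: "sos s \<Longrightarrow> self_adjoint y \<Longrightarrow> norm (y * y) \<le> norm (y * y + s)"
proof (induction arbitrary: y rule: sos.induct)
  case sos0 then show ?case by simp
next
  case (sosI x s)
  obtain v where v: "self_adjoint v" "v * v = y * y + x * x" using sqrt2[OF sosI(4) sosI(1)] by blast
  have "norm (y * y) \<le> norm (y * y + x * x)" by (rule twosq[OF sosI(4) sosI(1)])
  also have "\<dots> = norm (v * v)" by (simp add: v)
  also have "\<dots> \<le> norm (v * v + s)" by (rule sosI(3)[OF v(1)])
  also have "v * v + s = y * y + (x * x + s)" by (simp add: v add.assoc)
  finally show ?case .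
qed

lemma sos_sq_zero: "sos s \<Longrightarrow> self_adjoint y \<Longrightarrow> y * y + s = 0 \<Longrightarrow> y = 0"
  using norm_sos[of s y] norm_sq_sa[of y] by simp

lemma sa_pow2: "self_adjoint (f::'a::comm_cstar_algebra) \<Longrightarrow> norm (f ^ (2 ^ n)) = norm f ^ (2 ^ n)"
proof (induction n)
  case 0 then show ?case by simp
next
  case (Suc n)
  have "f ^ (2 ^ Suc n) = f ^ (2 ^ n) * f ^ (2 ^ n)" by (simp add: power_add[symmetric] mult_2)
  then have "norm (f ^ (2 ^ Suc n)) = (norm (f ^ (2 ^ n)))\<^sup>2" using norm_sq_sa[OF sa_power[OF Suc.prems]] by simp
  then show ?case using Suc by (simp add: power_mult[symmetric] mult.commute)
qed

lemma sa_nilp: "self_adjoint (f::'a::comm_cstar_algebra) \<Longrightarrow> f ^ k = 0 \<Longrightarrow> f = 0"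
proof -
  assume sf: "self_adjoint f" and fk: "f ^ k = 0"
  have "k \<le> 2 ^ k" using less_exp[of k] by simp
  then have "f ^ (2 ^ k) = f ^ k * f ^ (2 ^ k - k)" by (simp add: power_add[symmetric])
  then have "f ^ (2 ^ k) = 0" using fk by simp
  then have "norm f ^ (2 ^ k) = 0" using sa_pow2[OF sf, of k] by simp
  then show "f = 0" by simp
qed

lemma positive_sos:
  assumes "positive (a::'a::comm_cstar_algebra)"
  shows "sos a"
proof -
  obtain b where ab: "a = cstar b * b" using assms by (auto simp: positive_def)
  define x where "x = (1/2) *\<^sub>R (b + cstar b)"
  define y where "y = (1/2) *\<^sub>R (jj * (cstar b - b))"
  have sx: "self_adjoint x" by (simp add: x_def self_adjoint_def cstar_add cstar_cstar add.commute)
  have sy: "self_adjoint y"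
    by (simp add: y_def self_adjoint_def cstar_mult cstar_cstar cstar_jj algebra_simps)
  have "jj * y = (1/2) *\<^sub>R ((jj * jj) * (cstar b - b))" by (simp add: y_def mult.assoc)
  also have "\<dots> = (1/2) *\<^sub>R (b - cstar b)" by (simp add: jj_sq)
  finally have "x + jj * y = (1/2) *\<^sub>R (b + b)" by (simp add: x_def scaleR_add_right[symmetric])
  also have "\<dots> = b" by (simp add: scaleR_2[symmetric])
  finally have b: "b = x + jj * y" by simp
  have "a = x * x + y * y" using ab b cstar_z_z[OF sx sy] by simp
  then show ?thesis using sx sy by (auto intro!: sos.sosI sos_sq)
qed

definition cone :: "'a::comm_cstar_algebra set \<Rightarrow> bool" where
  "cone P \<longleftrightarrow> (\<forall>x\<in>P. self_adjoint x) \<and> (\<forall>x\<in>P. \<forall>y\<in>P. x + y \<in> P \<and> x * y \<in> P)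
     \<and> (\<forall>x. self_adjoint x \<longrightarrow> x * x \<in> P)"

definition ext :: "'a::comm_cstar_algebra set \<Rightarrow> 'a \<Rightarrow> 'a set" where
  "ext M a = {s + a * t | s t. s \<in> M \<and> t \<in> M}"

definition point :: "'a::comm_cstar_algebra set \<Rightarrow> bool" where
  "point P \<longleftrightarrow> cone P \<and> -1 \<notin> P \<and> (\<forall>a. self_adjoint a \<longrightarrow> a \<in> P \<or> -a \<in> P) \<and>
     (\<forall>a b. self_adjoint a \<longrightarrow> self_adjoint b \<longrightarrow> -a \<notin> P \<longrightarrow> -b \<notin> P \<longrightarrow> -(a * b) \<notin> P)"

lemma cone_zero: "cone P \<Longrightarrow> 0 \<in> P"
  unfolding cone_def using sa_zero by fastforce

lemma cone_one: "cone P \<Longrightarrow> 1 \<in> P"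
  unfolding cone_def using sa_one by fastforce

lemma cone_ext:
  assumes c: "cone M" and a: "self_adjoint a"
  shows "cone (ext M a)"
proof -
  have sa: "\<forall>x\<in>M. self_adjoint x" and cl: "\<forall>x\<in>M. \<forall>y\<in>M. x + y \<in> M \<and> x * y \<in> M"
    and sq: "\<forall>x. self_adjoint x \<longrightarrow> x * x \<in> M" using c by (auto simp: cone_def)
  have 1: "\<forall>x\<in>ext M a. self_adjoint x"
    using sa a by (auto simp: ext_def intro!: sa_add sa_mult)
  have 2: "x + y \<in> ext M a \<and> x * y \<in> ext M a" if xy: "x \<in> ext M a" "y \<in> ext M a" for x y
  proof -
    obtain s1 t1 s2 t2 where x: "x = s1 + a * t1" "s1 \<in> M" "t1 \<in> M"
      and y: "y = s2 + a * t2" "s2 \<in> M" "t2 \<in> M" using xy by (auto simp: ext_def)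
    have "x + y = (s1 + s2) + a * (t1 + t2)" by (simp add: x y algebra_simps)
    moreover have "s1 + s2 \<in> M" "t1 + t2 \<in> M" using cl x y by auto
    ultimately have A: "x + y \<in> ext M a" by (auto simp: ext_def)
    have "x * y = (s1 * s2 + (a * a) * (t1 * t2)) + a * (s1 * t2 + t1 * s2)" by (simp add: x y algebra_simps)
    moreover have "a * a \<in> M" using sq a by blast
    then have "s1 * s2 + (a * a) * (t1 * t2) \<in> M" "s1 * t2 + t1 * s2 \<in> M" using cl x y by auto
    ultimately have B: "x * y \<in> ext M a" by (auto simp: ext_def)
    show ?thesis using A B by blast
  qed
  have 3: "x * x \<in> ext M a" if "self_adjoint x" for x
  proof -
    have "x * x = x * x + a * 0" by simp
    then show ?thesis using sq that cone_zero[OF c] unfolding ext_def by blast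
  qed
  show ?thesis using 1 2 3 by (auto simp: cone_def)
qed

lemma sub_ext: "cone M \<Longrightarrow> M \<subseteq> ext M a"
proof
  fix x assume "cone M" "x \<in> M"
  moreover have "x = x + a * 0" by simp
  ultimately show "x \<in> ext M a" using cone_zero unfolding ext_def by blast
qed

lemma in_ext: "cone M \<Longrightarrow> a \<in> ext M a"
proof -
  assume "cone M"
  moreover have "a = 0 + a * 1" by simp
  ultimately show ?thesis using cone_zero cone_one unfolding ext_def by blast
qed

lemma cone_sq_pow: "cone P \<Longrightarrow> self_adjoint f \<Longrightarrow> (f * f) ^ k \<in> P"
proof -
  assume c: "cone P" and f: "self_adjoint f"
  have "(f * f) ^ k = f ^ k * f ^ k" by (simp add: power_mult_distrib)
  then show ?thesis using c sa_power[OF f] by (simp add: cone_def)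
qed

lemma exists_point0:
  assumes f: "self_adjoint (f::'a::comm_cstar_algebra)" "f \<noteq> 0"
  shows "\<exists>P. point P \<and> Collect sos \<subseteq> P \<and> -(f * f) \<notin> P"
proof -
  define g where "g = f * f"
  define \<A> where "\<A> = {P::'a set. cone P \<and> Collect sos \<subseteq> P \<and> (\<forall>k. -(g ^ k) \<notin> P)}"
  have cs: "cone (Collect sos :: 'a set)"
    unfolding cone_def by (auto intro: sos_sa sos_add sos_mult sos_sq)
  have ns: "\<not> sos (-(g ^ k))" for k
  proof
    assume s: "sos (-(g ^ k))"
    have "f ^ k * f ^ k + (-(g ^ k)) = 0" by (simp add: g_def power_mult_distrib)
    then have "f ^ k = 0" using sos_sq_zero[OF s sa_power[OF f(1)]] by blast
    then show False using sa_nilp[OF f(1)] f(2) by blast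
  qed
  have ne: "\<A> \<noteq> {}" using cs ns unfolding \<A>_def by blast
  have ch: "\<Union>\<C> \<in> \<A>" if Cne: "\<C> \<noteq> {}" "subset.chain \<A> \<C>" for \<C>
  proof -
    have CA: "\<C> \<subseteq> \<A>" and lin: "\<forall>X\<in>\<C>. \<forall>Y\<in>\<C>. X \<subseteq> Y \<or> Y \<subseteq> X"
      using Cne(2) by (auto simp: subset.chain_def)
    obtain X0 where X0: "X0 \<in> \<C>" using Cne(1) by blast
    have c1: "\<forall>x\<in>\<Union>\<C>. self_adjoint x" using CA by (auto simp: \<A>_def cone_def)
    have c2: "x + y \<in> \<Union>\<C> \<and> x * y \<in> \<Union>\<C>" if xy: "x \<in> \<Union>\<C>" "y \<in> \<Union>\<C>" for x y
    proof -
      obtain X Y where XY: "X \<in> \<C>" "Y \<in> \<C>" "x \<in> X" "y \<in> Y" using xy by blast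
      then obtain Z where Z: "Z \<in> \<C>" "x \<in> Z" "y \<in> Z" using lin by blast
      then have "cone Z" using CA by (auto simp: \<A>_def)
      then show ?thesis using Z by (auto simp: cone_def)
    qed
    have c3: "x * x \<in> \<Union>\<C>" if "self_adjoint x" for x
    proof -
      have "cone X0" using X0 CA by (auto simp: \<A>_def)
      then have "x * x \<in> X0" using that by (simp add: cone_def)
      then show ?thesis using X0 by blast
    qed
    have "cone (\<Union>\<C>)" using c1 c2 c3 by (auto simp: cone_def)
    moreover have "Collect sos \<subseteq> \<Union>\<C>" using X0 CA by (auto simp: \<A>_def)
    moreover have "\<forall>k. -(g ^ k) \<notin> \<Union>\<C>" using CA by (auto simp: \<A>_def)
    ultimately show ?thesis by (simp add: \<A>_def)
  qed
  obtain M where MA: "M \<in> \<A>" and mx: "\<forall>X\<in>\<A>. M \<subseteq> X \<longrightarrow> X = M"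
    using subset_Zorn_nonempty[OF ne ch] by blast
  have cM: "cone M" and sM: "Collect sos \<subseteq> M" and gM: "\<forall>k. -(g ^ k) \<notin> M"
    using MA by (auto simp: \<A>_def)
  have sa: "\<forall>x\<in>M. self_adjoint x" and cl: "\<forall>x\<in>M. \<forall>y\<in>M. x + y \<in> M \<and> x * y \<in> M"
    and sq: "\<forall>x. self_adjoint x \<longrightarrow> x * x \<in> M" using cM by (auto simp: cone_def)
  have gk: "g ^ k \<in> M" for k unfolding g_def by (rule cone_sq_pow[OF cM f(1)])
  have extk: "\<exists>k s t. s \<in> M \<and> t \<in> M \<and> -(g ^ k) = s + a * t" if a: "self_adjoint a" "a \<notin> M" for a
  proof (rule ccontr)
    assume "\<not> ?thesis"
    then have "\<forall>k. -(g ^ k) \<notin> ext M a" by (auto simp: ext_def)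
    moreover have "cone (ext M a)" by (rule cone_ext[OF cM a(1)])
    moreover have "Collect sos \<subseteq> ext M a" using sM sub_ext[OF cM] by blast
    ultimately have "ext M a \<in> \<A>" by (simp add: \<A>_def)
    then have "ext M a = M" using mx sub_ext[OF cM] by blast
    then show False using in_ext[OF cM, of a] a by simp
  qed
  have tot: "a \<in> M \<or> -a \<in> M" if a: "self_adjoint a" for a
  proof (rule ccontr)
    assume "\<not> ?thesis"
    then have n1: "a \<notin> M" and n2: "-a \<notin> M" by auto
    obtain k s t where kst: "s \<in> M" "t \<in> M" "-(g ^ k) = s + a * t" using extk[OF a n1] by blast
    obtain m s' t' where mst: "s' \<in> M" "t' \<in> M" "-(g ^ m) = s' + (-a) * t'"
      using extk[OF sa_minus[OF a] n2] by blast
    have G1: "g ^ k = -(s + a * t)" using kst(3) by (metis minus_minus)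
    have G2: "g ^ m = -(s' + (-a) * t')" using mst(3) by (metis minus_minus)
    have "-(g ^ k * g ^ m) = g ^ k * s' + s * g ^ m + s * s' + (a * a) * (t * t')"
      by (simp only: G1 G2) (simp add: algebra_simps)
    moreover have "g ^ k * s' + s * g ^ m + s * s' + (a * a) * (t * t') \<in> M"
      using cl gk kst mst sq a by (meson)
    ultimately show False using gM by (metis power_add)
  qed
  have prime: "-(a * b) \<notin> M" if a: "self_adjoint a" "self_adjoint b" "-a \<notin> M" "-b \<notin> M" for a b
  proof
    assume ab: "-(a * b) \<in> M"
    have bM: "b \<in> M" using tot a by blast
    obtain k s t where kst: "s \<in> M" "t \<in> M" "-(g ^ k) = s + (-a) * t"
      using extk[OF sa_minus[OF a(1)] a(3)] by blast
    obtain m s' t' where mst: "s' \<in> M" "t' \<in> M" "-(g ^ m) = s' + (-b) * t'"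
      using extk[OF sa_minus[OF a(2)] a(4)] by blast
    have G1: "g ^ k = -(s + (-a) * t)" using kst(3) by (metis minus_minus)
    have G2: "g ^ m = -(s' + (-b) * t')" using mst(3) by (metis minus_minus)
    have "-(g ^ k * g ^ m) = g ^ k * s' + (s * b + (-(a * b)) * t) * t'"
      by (simp only: G1 G2) (simp add: algebra_simps)
    moreover have "g ^ k * s' + (s * b + (-(a * b)) * t) * t' \<in> M"
      using cl gk kst mst ab bM by (meson)
    ultimately show False using gM by (metis power_add)
  qed
  have m1: "-1 \<notin> M" using gM[rule_format, of 0] by simp
  have "point M" unfolding point_def using cM m1 tot prime by blast
  moreover have "-(f * f) \<notin> M" using gM[rule_format, of 1] by (simp add: g_def)
  ultimately show ?thesis using sM by blast
qed

lemma exists_point: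
  assumes "sos (f::'a::comm_cstar_algebra)" "f \<noteq> 0"
  shows "\<exists>P. point P \<and> Collect sos \<subseteq> P \<and> -f \<notin> P"
proof -
  obtain P where P: "point P" "Collect sos \<subseteq> P" "-(f * f) \<notin> P"
    using exists_point0[OF sos_sa[OF assms(1)] assms(2)] by blast
  have "f \<in> P" using P(2) assms(1) by blast
  then have "-f \<notin> P"
    using P(1,3) unfolding point_def cone_def by (metis minus_mult_left)
  then show ?thesis using P by blast
qed

fun sem :: "'a::comm_cstar_algebra set \<Rightarrow> 'a lterm \<Rightarrow> bool" where
  "sem P (D a) = (self_adjoint a \<and> -a \<notin> P)"
| "sem P LTop = True"
| "sem P LBot = False"
| "sem P (LMeet x y) = (sem P x \<and> sem P y)"
| "sem P (LJoin x y) = (sem P x \<or> sem P y)"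

lemma sound:
  assumes p: "point P"
  shows "lle x y \<Longrightarrow> sem P x \<Longrightarrow> sem P y"
proof (induction rule: lle.induct)
  have c: "cone P" and m1: "-1 \<notin> P" and tot: "\<And>a. self_adjoint a \<Longrightarrow> a \<in> P \<or> -a \<in> P"
    and pr: "\<And>a b. self_adjoint a \<Longrightarrow> self_adjoint b \<Longrightarrow> -a \<notin> P \<Longrightarrow> -b \<notin> P \<Longrightarrow> -(a * b) \<notin> P"
    using p by (auto simp: point_def)
  have cl: "\<And>x y. x \<in> P \<Longrightarrow> y \<in> P \<Longrightarrow> x + y \<in> P \<and> x * y \<in> P"
    and sq: "\<And>x. self_adjoint x \<Longrightarrow> x * x \<in> P" using c by (auto simp: cone_def)
  {
    case (rel_one) show ?case using m1 by simp
  next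
    case (rel_neg a) then show ?case using tot[of a] by simp
  next
    case (rel_sq b) then show ?case using sq[of b] by simp
  next
    case (rel_add a b) then show ?case using cl[of "-a" "-b"] by (auto simp: add.commute)
  next
    case (rel_mult1 a b)
    then have n: "-(a * b) \<notin> P" by simp
    show ?case
    proof (cases "a \<in> P")
      case aP: True
      show ?thesis
      proof (cases "b \<in> P")
        case True
        have "-a \<notin> P" using n cl[of "-a" b] True by auto
        moreover have "-b \<notin> P" using n cl[of a "-b"] aP by auto
        ultimately show ?thesis using rel_mult1 by simp
      next
        case False
        then have "-b \<in> P" using tot rel_mult1 by blast
        then show ?thesis using n cl[of a "-b"] aP by auto
      qed
    next
      case aN: False
      then have maP: "-a \<in> P" using tot rel_mult1 by blast
      show ?thesis
      proof (cases "b \<in> P")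
        case True
        then show ?thesis using n cl[of "-a" b] maP by auto
      next
        case False
        then show ?thesis using aN rel_mult1 by (auto intro: sa_minus)
      qed
    qed
  next
    case (rel_mult2 a b)
    then show ?case using pr[of a b] pr[of "-a" "-b"] by (auto intro: sa_minus sa_mult)
  }
qed auto

declare lle.trans [trans]

lemma meet_mono: "lle x x' \<Longrightarrow> lle y y' \<Longrightarrow> lle (LMeet x y) (LMeet x' y')"
  by (meson lle.meetI lle.meet1 lle.meet2 lle.trans)

lemma join_mono: "lle x x' \<Longrightarrow> lle y y' \<Longrightarrow> lle (LJoin x y) (LJoin x' y')"
  by (meson lle.joinI lle.join1 lle.join2 lle.trans)

lemma cancel: "lle x (LJoin y z) \<Longrightarrow> lle (LMeet x z) LBot \<Longrightarrow> lle x y"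
proof -
  assume h1: "lle x (LJoin y z)" and h2: "lle (LMeet x z) LBot"
  have "lle x (LMeet x (LJoin y z))" by (rule lle.meetI[OF lle.refl h1])
  also have "lle (LMeet x (LJoin y z)) (LJoin (LMeet x y) (LMeet x z))" by (rule lle.distrib)
  also have "lle (LJoin (LMeet x y) (LMeet x z)) y"
    by (rule lle.joinI[OF lle.meet2 lle.trans[OF h2 lle.bot]])
  finally show ?thesis .
qed

lemma join_bot: "lle x y \<Longrightarrow> lle z LBot \<Longrightarrow> lle (LJoin x z) y"
  by (meson lle.joinI lle.bot lle.trans)

lemma meet_bot: "lle x (D w) \<Longrightarrow> lle x (D (- w)) \<Longrightarrow> self_adjoint w \<Longrightarrow> lle x LBot"
  by (meson lle.meetI lle.rel_neg lle.trans)

lemma D0: "lle (D (0::'a::comm_cstar_algebra)) LBot"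
  using lle.rel_sq[of "0::'a"] by simp

lemma negsos: "sos s \<Longrightarrow> lle (D (- s)) LBot"
proof (induction rule: sos.induct)
  case sos0 then show ?case using D0 by simp
next
  case (sosI x s)
  have "lle (D (- (x * x) + - s)) (LJoin (D (- (x * x))) (D (- s)))"
    by (rule lle.rel_add) (auto intro: sa_minus sa_mult sosI sos_sa)
  also have "lle (LJoin (D (- (x * x))) (D (- s))) LBot"
    by (rule lle.joinI[OF lle.rel_sq[OF sosI(1)] sosI(3)])
  finally show ?case by (simp add: add.commute)
qed

lemma mult_pos_le:
  assumes "self_adjoint t" "self_adjoint u" "lle (D (- t)) LBot"
  shows "lle (D (t * u)) (D u)"
proof -
  have "lle (D (t * u)) (LJoin (LMeet (D t) (D u)) (LMeet (D (- t)) (D (- u))))"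
    by (rule lle.rel_mult1[OF assms(1,2)])
  also have "lle (LJoin (LMeet (D t) (D u)) (LMeet (D (- t)) (D (- u)))) (D u)"
    by (rule lle.joinI[OF lle.meet2 lle.trans[OF lle.meet1 lle.trans[OF assms(3) lle.bot]]])
  finally show ?thesis .
qed

lemma meet_le_mult: "self_adjoint a \<Longrightarrow> self_adjoint b \<Longrightarrow> lle (LMeet (D a) (D b)) (D (a * b))"
  by (rule lle.trans[OF lle.join1 lle.rel_mult2])

lemma D_le_sq: "self_adjoint u \<Longrightarrow> lle (D u) (D (u * u))"
  by (rule lle.trans[OF lle.meetI[OF lle.refl lle.refl] meet_le_mult])

lemma sq_le: "self_adjoint a \<Longrightarrow> lle (D (a * a)) (LJoin (D a) (D (- a)))"
  by (meson lle.rel_mult1 lle.joinI lle.meet1 lle.join1 lle.join2 lle.trans)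

lemma sos_meet:
  assumes "sos b" "sos c"
  shows "leq (LMeet (D b) (D c)) (D (b * c))"
proof -
  have sb: "self_adjoint b" "self_adjoint c" using assms sos_sa by auto
  have "lle (D (b * c)) (LJoin (LMeet (D b) (D c)) (LMeet (D (- b)) (D (- c))))"
    by (rule lle.rel_mult1[OF sb])
  also have "lle (LJoin (LMeet (D b) (D c)) (LMeet (D (- b)) (D (- c)))) (LMeet (D b) (D c))"
    by (rule lle.joinI[OF lle.refl lle.trans[OF lle.meet1 lle.trans[OF negsos[OF assms(1)] lle.bot]]])
  finally have 1: "lle (D (b * c)) (LMeet (D b) (D c))" .
  have 2: "lle (LMeet (D b) (D c)) (D (b * c))"
    by (rule lle.trans[OF lle.join1 lle.rel_mult2[OF sb]])
  show ?thesis using 1 2 by (simp add: leq_def)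
qed

lemma nf_D:
  assumes a: "self_adjoint (a::'a::comm_cstar_algebra)"
  shows "\<exists>c. sos c \<and> leq (D a) (D c)"
proof -
  obtain s where s: "self_adjoint s" "(s * s) * (s * s) = a * a" using absval[OF a] by blast
  define t where "t = s * s"
  have st: "sos t" unfolding t_def by (rule sos_sq[OF s(1)])
  have sat: "self_adjoint t" by (rule sos_sa[OF st])
  have tt: "t * t = a * a" using s(2) by (simp add: t_def)
  define u where "u = a + t"
  have sau: "self_adjoint u" by (simp add: u_def sa_add a sat)
  have s2: "sos (t + t)" by (rule sos_add[OF st st])
  have sa2: "self_adjoint (t + t)" by (rule sos_sa[OF s2])
  define w where "w = a - t"
  have saw: "self_adjoint w" by (simp add: w_def sa_diff a sat)
  have uu: "u * u = (t + t) * u"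
  proof -
    have "u * u = a * a + (t + t) * a + t * t" by (simp add: u_def algebra_simps)
    also have "\<dots> = (t + t) * u" by (simp add: tt[symmetric] u_def algebra_simps)
    finally show ?thesis .
  qed
  have ii: "lle (D (u * u)) (D u)"
    unfolding uu by (rule mult_pos_le[OF sa2 sau negsos[OF s2]])
  have i: "lle (D u) (D (u * u))" by (rule D_le_sq[OF sau])
  have ww: "w * w = (t + t) * (- w)"
  proof -
    have "w * w = a * a - (t + t) * a + t * t" by (simp add: w_def algebra_simps)
    also have "\<dots> = (t + t) * (- w)" by (simp add: tt[symmetric] w_def algebra_simps)
    finally show ?thesis .
  qed
  have "lle (D w) (D (w * w))" by (rule D_le_sq[OF saw])
  also have "lle (D (w * w)) (D (- w))"
    unfolding ww by (rule mult_pos_le[OF sa2 sa_minus[OF saw] negsos[OF s2]])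
  finally have wm: "lle (D w) (D (- w))" .
  have wb: "lle (D w) LBot" by (rule meet_bot[OF lle.refl wm saw])
  have "lle (D ((a + a) + - a)) (LJoin (D (a + a)) (D (- a)))"
    by (rule lle.rel_add[OF sa_add[OF a a] sa_minus[OF a]])
  then have "lle (D a) (LJoin (D (a + a)) (D (- a)))" by simp
  then have a2: "lle (D a) (D (a + a))" by (rule cancel[OF _ lle.rel_neg[OF a]])
  have "lle (D (u + w)) (LJoin (D u) (D w))" by (rule lle.rel_add[OF sau saw])
  also have "lle (LJoin (D u) (D w)) (D u)" by (rule join_bot[OF lle.refl wb])
  finally have "lle (D (u + w)) (D u)" .
  moreover have "u + w = a + a" by (simp add: u_def w_def)
  ultimately have "lle (D (a + a)) (D u)" by simp
  with a2 have iii: "lle (D a) (D u)" by (rule lle.trans)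
  have "lle (D t) (D (t * t))" by (rule D_le_sq[OF sat])
  also have "lle (D (t * t)) (LJoin (D a) (D (- a)))" unfolding tt by (rule sq_le[OF a])
  finally have tle: "lle (D t) (LJoin (D a) (D (- a)))" .
  have "lle (D u) (LJoin (D a) (D t))" unfolding u_def by (rule lle.rel_add[OF a sat])
  also have "lle (LJoin (D a) (D t)) (LJoin (D a) (D (- a)))" by (rule lle.joinI[OF lle.join1 tle])
  finally have iv1: "lle (D u) (LJoin (D a) (D (- a)))" .
  have ua: "u * (- a) = t * (- u)"
  proof -
    have "u * (- a) = - (a * a) - t * a" by (simp add: u_def algebra_simps)
    also have "\<dots> = t * (- u)" by (simp add: tt[symmetric] u_def algebra_simps)
    finally show ?thesis .
  qed
  have "lle (LMeet (D u) (D (- a))) (D (u * (- a)))" by (rule meet_le_mult[OF sau sa_minus[OF a]])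
  also have "lle (D (u * (- a))) (D (- u))"
    unfolding ua by (rule mult_pos_le[OF sat sa_minus[OF sau] negsos[OF st]])
  finally have iv2: "lle (LMeet (D u) (D (- a))) (D (- u))" .
  have iv3: "lle (LMeet (D u) (D (- a))) LBot"
    by (rule meet_bot[OF lle.trans[OF lle.meet1 lle.refl] iv2 sau])
  have iv: "lle (D u) (D a)" by (rule cancel[OF iv1 iv3])
  have "leq (D a) (D (u * u))"
    unfolding leq_def using lle.trans[OF iii i] lle.trans[OF ii iv] by blast
  moreover have "sos (u * u)" by (rule sos_sq[OF sau])
  ultimately show ?thesis by blast
qed

lemma nf: "lwf y \<Longrightarrow> \<exists>c::'a::comm_cstar_algebra. sos c \<and> leq y (D c)"
proof (induction y)
  case (D a) then show ?case using nf_D by simp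
next
  case LTop
  have "leq LTop (D (1::'a))" by (simp add: leq_def lle.rel_one lle.top)
  then show ?case using sos_one by blast
next
  case LBot
  have "leq LBot (D (0::'a))" by (simp add: leq_def lle.bot D0)
  then show ?case using sos.sos0 by blast
next
  case (LMeet y1 y2)
  then obtain c1 c2 where c: "sos c1" "leq y1 (D c1)" "sos c2" "leq y2 (D c2)" by auto
  have "leq (LMeet y1 y2) (LMeet (D c1) (D c2))" using c by (simp add: leq_def meet_mono)
  then have "leq (LMeet y1 y2) (D (c1 * c2))" using sos_meet[OF c(1,3)]
    unfolding leq_def by (meson lle.trans)
  then show ?case using sos_mult[OF c(1,3)] by blast
next
  case (LJoin y1 y2)
  then obtain c1 c2 where c: "sos c1" "leq y1 (D c1)" "sos c2" "leq y2 (D c2)" by auto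
  have s1: "self_adjoint c1" and s2: "self_adjoint c2" using c sos_sa by auto
  have j: "leq (LJoin y1 y2) (LJoin (D c1) (D c2))" using c by (simp add: leq_def join_mono)
  have le1: "lle (D c1) (D (c1 + c2))" if "sos c1" "sos c2" for c1 c2 :: 'a
  proof -
    have "lle (D ((c1 + c2) + - c2)) (LJoin (D (c1 + c2)) (D (- c2)))"
      using that by (intro lle.rel_add) (auto intro: sa_add sa_minus sos_sa)
    also have "lle (LJoin (D (c1 + c2)) (D (- c2))) (D (c1 + c2))"
      by (rule join_bot[OF lle.refl negsos[OF that(2)]])
    finally show ?thesis by simp
  qed
  have "leq (LJoin (D c1) (D c2)) (D (c1 + c2))"
    unfolding leq_def using lle.rel_add[OF s1 s2] le1[OF c(1,3)] le1[OF c(3,1)]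
    by (metis add.commute lle.joinI)
  then have "leq (LJoin y1 y2) (D (c1 + c2))" using j unfolding leq_def by (meson lle.trans)
  then show ?case using sos_add[OF c(1,3)] by blast
qed

definition zpP :: "'a::comm_cstar_algebra \<Rightarrow> 'a \<Rightarrow> bool" where
  "zpP a p \<longleftrightarrow> projection p \<and> a * p = 0 \<and> (\<forall>b. a * b = 0 \<longrightarrow> b = b * p)"

lemma zero_proj_props:
  assumes "rickart TYPE('a::comm_cstar_algebra)"
  shows "zpP (a::'a) (zero_proj a)"
proof -
  obtain p where p: "zpP a p" using assms by (auto simp: rickart_def zpP_def)
  have u: "q = p" if q: "zpP a q" for q
  proof -
    have "q = q * p" using p q by (auto simp: zpP_def)
    moreover have "p = p * q" using p q by (auto simp: zpP_def)
    ultimately show ?thesis by (simp add: mult.commute)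
  qed
  have "(THE q. zpP a q) = p" by (rule the_equality[of "zpP a" p, OF p u])
  then have "zero_proj a = p" by (simp add: zero_proj_def zpP_def)
  then show ?thesis using p by simp
qed

lemma keyK:
  assumes r: "rickart TYPE('a::comm_cstar_algebra)" and c: "sos (c::'a)" and x: "lwf x"
  shows "lle (LMeet x (D c)) LBot \<longleftrightarrow> lle x (D (zero_proj c))"
proof -
  define p where "p = zero_proj c"
  have zp: "zpP c p" unfolding p_def by (rule zero_proj_props[OF r])
  have sp: "self_adjoint p" using zp by (simp add: zpP_def projection_def self_adjoint_def)
  have sc: "self_adjoint c" by (rule sos_sa[OF c])
  have cp: "c * p = 0" using zp by (simp add: zpP_def)
  show ?thesis unfolding p_def[symmetric]
  proof
    assume h: "lle (LMeet x (D c)) LBot"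
    obtain b where b: "sos b" "leq x (D b)" using nf[OF x] by blast
    have sb: "self_adjoint b" by (rule sos_sa[OF b(1)])
    have bc0: "lle (LMeet (D b) (D c)) LBot"
      using b(2) h unfolding leq_def by (meson lle.trans meet_mono lle.refl)
    have bc: "b * c = 0"
    proof (rule ccontr)
      assume ne: "b * c \<noteq> 0"
      obtain P where P: "point P" "Collect sos \<subseteq> P" "-(b * c) \<notin> P"
        using exists_point[OF sos_mult[OF b(1) c] ne] by blast
      have cl: "\<And>x y. x \<in> P \<Longrightarrow> y \<in> P \<Longrightarrow> x * y \<in> P" using P(1) by (auto simp: point_def cone_def)
      have "b \<in> P" "c \<in> P" using P(2) b(1) c by auto
      then have "-b \<notin> P" "-c \<notin> P" using P(3) cl by (metis minus_mult_left minus_mult_right)+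
      then have "sem P (LMeet (D b) (D c))" using sb sc by simp
      then show False using sound[OF P(1) bc0] by simp
    qed
    then have "c * b = 0" by (simp add: mult.commute)
    then have bp: "b = b * p" using zp by (simp add: zpP_def)
    have "lle (D (b * p)) (LJoin (LMeet (D b) (D p)) (LMeet (D (- b)) (D (- p))))"
      by (rule lle.rel_mult1[OF sb sp])
    also have "lle (LJoin (LMeet (D b) (D p)) (LMeet (D (- b)) (D (- p)))) (D p)"
      by (rule lle.joinI[OF lle.meet2 lle.trans[OF lle.meet1 lle.trans[OF negsos[OF b(1)] lle.bot]]])
    finally have "lle (D b) (D p)" using bp by simp
    then show "lle x (D p)" using b(2) unfolding leq_def by (meson lle.trans)
  next
    assume h: "lle x (D p)"
    have "lle (LMeet x (D c)) (LMeet (D p) (D c))" by (rule meet_mono[OF h lle.refl])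
    also have "lle (LMeet (D p) (D c)) (D (p * c))" by (rule meet_le_mult[OF sp sc])
    also have "p * c = 0" using cp by (simp add: mult.commute)
    finally show "lle (LMeet x (D c)) LBot" using D0 lle.trans by fastforce
  qed
qed

lemma leq_bot: "leq z LBot \<longleftrightarrow> lle z LBot"
  by (simp add: leq_def lle.bot)

theorem proposition5:
  assumes "rickart TYPE('a::comm_cstar_algebra)"
  shows "\<exists>N :: 'a lterm \<Rightarrow> 'a lterm. is_pseudocomplement_LA N \<and>
           (\<forall>a::'a. positive a \<longrightarrow> leq (N (D a)) (D (zero_proj a)))"
proof -
  define C where "C = (\<lambda>y::'a lterm. SOME c. sos c \<and> leq y (D c))"
  define N where "N = (\<lambda>y. D (zero_proj (C y)))"
  have Cp: "sos (C y) \<and> leq y (D (C y))" if "lwf y" for y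
    unfolding C_def using nf[OF that] by (rule someI_ex)
  have wfN: "lwf (N y)" for y
    using zero_proj_props[OF assms, of "C y"]
    by (simp add: N_def zpP_def projection_def self_adjoint_def)
  have char: "lle (LMeet x y) LBot \<longleftrightarrow> lle x (N y)" if "lwf x" "lwf y" for x y
  proof -
    have c: "sos (C y)" "leq y (D (C y))" using Cp[OF that(2)] by auto
    have "lle (LMeet x y) LBot \<longleftrightarrow> lle (LMeet x (D (C y))) LBot"
      using c(2) unfolding leq_def by (meson lle.trans meet_mono lle.refl)
    also have "\<dots> \<longleftrightarrow> lle x (N y)" unfolding N_def by (rule keyK[OF assms c(1) that(1)])
    finally show ?thesis .
  qed
  have anti: "lle (N y) (N x)" if "lwf x" "lwf y" "lle x y" for x y
  proof -
    have "lle (LMeet (N y) y) LBot" using char[OF wfN that(2)] lle.refl by blast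
    then have "lle (LMeet (N y) x) LBot" using that(3) by (meson lle.trans meet_mono lle.refl)
    then show ?thesis using char[OF wfN that(1)] by blast
  qed
  have pc: "is_pseudocomplement_LA N"
    unfolding is_pseudocomplement_LA_def leq_bot
    using wfN anti char by (auto simp: leq_def)
  have pos: "leq (N (D a)) (D (zero_proj a))" if "positive a" for a
  proof -
    have sa: "sos a" by (rule positive_sos[OF that])
    have wa: "lwf (D a)" using sos_sa[OF sa] by simp
    have wz: "lwf (D (zero_proj a))"
      using zero_proj_props[OF assms, of a] by (simp add: zpP_def projection_def self_adjoint_def)
    have 1: "lle (N (D a)) (D (zero_proj a))"
    proof -
      have "lle (LMeet (N (D a)) (D a)) LBot" using char[OF wfN wa] lle.refl by blast
      then show ?thesis using keyK[OF assms sa wfN] by blast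
    qed
    have 2: "lle (D (zero_proj a)) (N (D a))"
    proof -
      have "lle (LMeet (D (zero_proj a)) (D a)) LBot" using keyK[OF assms sa wz] lle.refl by blast
      then show ?thesis using char[OF wz wa] by blast
    qed
    show ?thesis using 1 2 by (simp add: leq_def)
  qed
  show ?thesis using pc pos by blast
qed

end
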